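(* Let $G$ be a torsion-free finitely generated residually finite group and $\phi\in\operatorname{Aut}(G)$. If $R(\phi)<\infty$, then $\operatorname{Stab}_\phi(g)=1$ for all $g\in G$.
   Context: For an endomorphism $\phi$ of $G$, $R(\phi)\in\mathbb{N}\cup\{\infty\}$ is the number of classes of the relation $x\sim hx\phi(h)^{-1}$ ($h\in G$). The $\phi$-stabiliser of $g\in G$ is $\operatorname{Stab}_\phi(g)=\{b\in G\mid g=bg\phi(b)^{-1}\}$. *)

theory Defs
  imports "HOL-Algebra.Algebra" "HOL-Library.Extended_Nat"
begin

definition torsion_free :: "('a, 'b) monoid_scheme \<Rightarrow> bool" where
  "torsion_free G \<longleftrightarrow>
     (\<forall>g \<in> carrier G. g \<noteq> \<one>\<^bsub>G\<^esub> \<longrightarrow> (\<forall>n::nat. n > 0 \<longrightarrow> g [^]\<^bsub>G\<^esub> n \<noteq> \<one>\<^bsub>G\<^esub>))"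

definition finitely_generated :: "('a, 'b) monoid_scheme \<Rightarrow> bool" where
  "finitely_generated G \<longleftrightarrow>
     (\<exists>S. finite S \<and> S \<subseteq> carrier G \<and> generate G S = carrier G)"

definition residually_finite :: "('a, 'b) monoid_scheme \<Rightarrow> bool" where
  "residually_finite G \<longleftrightarrow>
     (\<forall>g \<in> carrier G. g \<noteq> \<one>\<^bsub>G\<^esub> \<longrightarrow>
        (\<exists>N. N \<lhd> G \<and> finite (rcosets\<^bsub>G\<^esub> N) \<and> g \<notin> N))"

definition twisted_conj :: "('a, 'b) monoid_scheme \<Rightarrow> ('a \<Rightarrow> 'a) \<Rightarrow> ('a \<times> 'a) set" where
  "twisted_conj G \<phi> = {(x, y). x \<in> carrier G \<and> y \<in> carrier G \<and>
      (\<exists>h \<in> carrier G. y = h \<otimes>\<^bsub>G\<^esub> x \<otimes>\<^bsub>G\<^esub> inv\<^bsub>G\<^esub> (\<phi> h))}"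

definition reidemeister_number :: "('a, 'b) monoid_scheme \<Rightarrow> ('a \<Rightarrow> 'a) \<Rightarrow> enat" where
  "reidemeister_number G \<phi> =
     (if finite (carrier G // twisted_conj G \<phi>) then enat (card (carrier G // twisted_conj G \<phi>)) else \<infinity>)"

definition twisted_stab :: "('a, 'b) monoid_scheme \<Rightarrow> ('a \<Rightarrow> 'a) \<Rightarrow> 'a \<Rightarrow> 'a set" where
  "twisted_stab G \<phi> g = {b \<in> carrier G. g = b \<otimes>\<^bsub>G\<^esub> g \<otimes>\<^bsub>G\<^esub> inv\<^bsub>G\<^esub> (\<phi> b)}"

end

theory Submission
  imports Defs
begin



fun Lb :: "nat \<Rightarrow> nat \<Rightarrow> nat" where
  "Lb 0 b = 0"
| "Lb (Suc r) b = max (Suc r * b) (Lb r (Suc r * b * b))"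

lemma Lb_mono_b: "b \<le> b' \<Longrightarrow> Lb r b \<le> Lb r b'"
proof (induction r arbitrary: b b')
  case 0 then show ?case by simp
next
  case (Suc r)
  have "Suc r * b * b \<le> Suc r * b' * b'" using Suc.prems by (intro mult_le_mono) (auto intro: add_le_mono mult_le_mono2)
  then have "Lb r (Suc r * b * b) \<le> Lb r (Suc r * b' * b')" using Suc.IH by blast
  moreover have "Suc r * b \<le> Suc r * b'" using Suc.prems by (rule mult_le_mono2)
  ultimately show ?case by auto
qed

lemma Lb_mono_r: "r \<le> r' \<Longrightarrow> Lb r b \<le> Lb r' b"
proof (induction r' arbitrary: b)
  case 0 then show ?case by simp
next
  case (Suc r')
  show ?case
  proof (cases "r = Suc r'")
    case True then show ?thesis by simp
  next
    case False
    then have "r \<le> r'" using Suc.prems by simp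
    then have "Lb r b \<le> Lb r' b" using Suc.IH by blast
    also have "\<dots> \<le> Lb r' (Suc r' * b * b)"
      by (rule Lb_mono_b) (cases b, auto)
    finally show ?thesis by simp
  qed
qed

lemma landau:
  "finite I \<Longrightarrow> card I = r \<Longrightarrow> \<forall>i\<in>I. n i \<ge> (1::nat) \<Longrightarrow> b \<ge> 1 \<Longrightarrow>
   (\<Sum>i\<in>I. 1 / real (n i)) = real a / real b \<Longrightarrow> i \<in> I \<Longrightarrow> n i \<le> Lb r b"
proof (induction r arbitrary: I a b i)
  case 0 then show ?case by simp
next
  case (Suc r)
  obtain m where m: "m \<in> I" "\<forall>j\<in>I. n m \<le> n j"
    using Suc.prems(1,6) by (metis ex_min_if_finite[of "n ` I"] finite_imageI image_iff empty_iff
        leI order_less_imp_le)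
  have pos: "\<And>j. j \<in> I \<Longrightarrow> real (n j) \<ge> 1" using Suc.prems(3) by auto
  have "(\<Sum>i\<in>I. 1 / real (n i)) \<le> (\<Sum>i\<in>I. 1 / real (n m))"
    proof (rule sum_mono)
    fix i assume "i \<in> I"
    then have "real (n m) \<le> real (n i)" "real (n m) \<ge> 1" using m pos by auto
    then show "1 / real (n i) \<le> 1 / real (n m)" by (simp add: divide_simps)
  qed
  also have "\<dots> = real (Suc r) / real (n m)" using Suc.prems(2) by simp
  finally have le1: "real a / real b \<le> real (Suc r) / real (n m)" using Suc.prems(5) by simp
  have nm1: "real (n m) \<ge> 1" using pos m by auto
  have "(\<Sum>i\<in>I. 1 / real (n i)) = 1 / real (n m) + (\<Sum>i\<in>I-{m}. 1 / real (n i))"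
    using Suc.prems(1) m(1) by (simp add: sum.remove)
  moreover have rest_nn: "(\<Sum>i\<in>I-{m}. 1 / real (n i)) \<ge> 0" by (rule sum_nonneg) simp
  ultimately have ge: "real a / real b \<ge> 1 / real (n m)" using Suc.prems(5) by simp
  then have apos: "a > 0" using nm1 Suc.prems(4) by (cases a) auto
  have "real (n m) \<le> real (Suc r) * real b / real a"
    using le1 apos Suc.prems(4) nm1 by (simp add: field_simps)
  also have "\<dots> \<le> real (Suc r) * real b"
  proof -
    have "real a \<ge> 1" using apos by simp
    moreover have "real (Suc r) * real b \<ge> 0" by simp
    ultimately have "real (Suc r) * real b \<le> real (Suc r) * real b * real a"
      by (metis mult_le_cancel_left1 mult.commute order_le_less not_le mult_nonneg_nonneg)
    then show ?thesis using apos by (simp add: divide_le_eq)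
  qed
  finally have nmb: "n m \<le> Suc r * b" by (metis of_nat_le_iff of_nat_mult)
  show ?case
  proof (cases "i = m")
    case True then show ?thesis using nmb by simp
  next
    case False
    have ab: "real a * real (n m) \<ge> real b" using ge nm1 Suc.prems(4) by (simp add: field_simps)
    then have ab': "a * n m \<ge> b" by (metis of_nat_le_iff of_nat_mult)
    have "(\<Sum>i\<in>I-{m}. 1 / real (n i)) = real a / real b - 1 / real (n m)"
      using \<open>(\<Sum>i\<in>I. 1 / real (n i)) = _ + _\<close> Suc.prems(5) by simp
    also have "\<dots> = real (a * n m - b) / real (b * n m)"
      using ab' nm1 Suc.prems(4) by (simp add: of_nat_diff field_simps)
    finally have eq: "(\<Sum>i\<in>I-{m}. 1 / real (n i)) = real (a * n m - b) / real (b * n m)" .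
    have "n i \<le> Lb r (b * n m)"
      apply (rule Suc.IH[OF _ _ _ _ eq])
      using Suc.prems m False nm1 by auto
    also have "\<dots> \<le> Lb r (Suc r * b * b)"
      apply (rule Lb_mono_b) using nmb by (simp add: mult.commute mult.left_commute)
    finally show ?thesis by simp
  qed
qed




lemma card_image_kernel_eq:
  assumes "\<And>x y. x \<in> A \<Longrightarrow> y \<in> A \<Longrightarrow> (p x = p y) \<longleftrightarrow> (q x = q y)"
  shows "card (p ` A) = card (q ` A)"
proof -
  define th where "th = (\<lambda>z. p (SOME k. k \<in> A \<and> q k = z))"
  have th: "th (q x) = p x" if "x \<in> A" for x
  proof -
    have "\<exists>k. k \<in> A \<and> q k = q x" using that by blast
    then have "(SOME k. k \<in> A \<and> q k = q x) \<in> A \<and> q (SOME k. k \<in> A \<and> q k = q x) = q x"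
      by (rule someI_ex)
    then show ?thesis unfolding th_def using assms that by blast
  qed
  have "p ` A = th ` (q ` A)" using th by (auto simp: image_iff)
  moreover have "inj_on th (q ` A)"
    by (auto simp: inj_on_def th assms)
  ultimately show ?thesis by (simp add: card_image)
qed

lemma (in group) rcos_eq_iff:
  assumes "subgroup H G" "x \<in> carrier G" "y \<in> carrier G"
  shows "(H #> x = H #> y) \<longleftrightarrow> x \<otimes> inv y \<in> H"
proof
  assume "H #> x = H #> y"
  then have "x \<in> H #> y" using rcos_self[OF assms(2,1)] by simp
  then show "x \<otimes> inv y \<in> H" using subgroup.rcos_module_imp[OF assms(1) is_group assms(3)] by blast
next
  assume "x \<otimes> inv y \<in> H"
  then have "x \<in> H #> y" using subgroup.rcos_module_rev[OF assms(1) is_group assms(3,2)] by blast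
  then show "H #> x = H #> y" using repr_independence[OF _ assms(3,1)] by simp
qed

context group begin

lemma lcancel': "x \<in> carrier G \<Longrightarrow> y \<in> carrier G \<Longrightarrow> z \<in> carrier G \<Longrightarrow> (x \<otimes> y = x \<otimes> z) = (y = z)"
  by (metis inv_closed l_inv l_one m_assoc)
lemma cancel1 [simp]: "x \<in> carrier G \<Longrightarrow> y \<in> carrier G \<Longrightarrow> inv x \<otimes> (x \<otimes> y) = y"
  by (simp add: m_assoc[symmetric])
lemma cancel2 [simp]: "x \<in> carrier G \<Longrightarrow> y \<in> carrier G \<Longrightarrow> x \<otimes> (inv x \<otimes> y) = y"
  by (simp add: m_assoc[symmetric])

lemma tc_equiv:
  assumes a: "\<alpha> \<in> hom G G"
  shows "equiv (carrier G) (twisted_conj G \<alpha>)"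
proof -
  interpret gh: group_hom G G \<alpha> using a by (unfold_locales) simp
  show ?thesis
  proof (rule equivI)
    show "refl_on (carrier G) (twisted_conj G \<alpha>)"
      unfolding refl_on_def twisted_conj_def by auto (metis one_closed l_one r_one inv_one gh.hom_one)
    show "sym (twisted_conj G \<alpha>)"
    proof (rule symI)
      fix x y assume "(x, y) \<in> twisted_conj G \<alpha>"
      then obtain h where h: "x \<in> carrier G" "y \<in> carrier G" "h \<in> carrier G" "y = h \<otimes> x \<otimes> inv (\<alpha> h)"
        unfolding twisted_conj_def by auto
      have "x = inv h \<otimes> y \<otimes> inv (\<alpha> (inv h))"
        using h by (simp add: gh.hom_inv m_assoc)
      then show "(y, x) \<in> twisted_conj G \<alpha>" using h unfolding twisted_conj_def by (auto intro!: bexI[of _ "inv h"])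
    qed
    show "trans (twisted_conj G \<alpha>)"
    proof (rule transI)
      fix x y z assume "(x, y) \<in> twisted_conj G \<alpha>" "(y, z) \<in> twisted_conj G \<alpha>"
      then obtain h k where h: "x \<in> carrier G" "y \<in> carrier G" "z \<in> carrier G" "h \<in> carrier G"
        "k \<in> carrier G" "y = h \<otimes> x \<otimes> inv (\<alpha> h)" "z = k \<otimes> y \<otimes> inv (\<alpha> k)"
        unfolding twisted_conj_def by auto
      have "z = (k \<otimes> h) \<otimes> x \<otimes> inv (\<alpha> (k \<otimes> h))"
        using h by (simp add: inv_mult_group m_assoc)
      then show "(x, z) \<in> twisted_conj G \<alpha>" using h unfolding twisted_conj_def by (auto intro!: bexI[of _ "k \<otimes> h"])
    qed
    show "twisted_conj G \<alpha> \<subseteq> carrier G \<times> carrier G" unfolding twisted_conj_def by auto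
  qed
qed

lemma stab_subgroup:
  assumes a: "\<alpha> \<in> hom G G" and x: "x \<in> carrier G"
  shows "subgroup (twisted_stab G \<alpha> x) G"
proof -
  interpret gh: group_hom G G \<alpha> using a by (unfold_locales) simp
  show ?thesis
  proof
    show "twisted_stab G \<alpha> x \<subseteq> carrier G" unfolding twisted_stab_def by auto
    show "\<one> \<in> twisted_stab G \<alpha> x" unfolding twisted_stab_def using x by simp
    fix a b assume ab: "a \<in> twisted_stab G \<alpha> x" "b \<in> twisted_stab G \<alpha> x"
    then have c: "a \<in> carrier G" "b \<in> carrier G" and e: "x = a \<otimes> x \<otimes> inv (\<alpha> a)" "x = b \<otimes> x \<otimes> inv (\<alpha> b)"
      unfolding twisted_stab_def by auto
    have "a \<otimes> b \<otimes> x \<otimes> inv (\<alpha> (a \<otimes> b)) = a \<otimes> (b \<otimes> x \<otimes> inv (\<alpha> b)) \<otimes> inv (\<alpha> a)"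
      using c x by (simp add: inv_mult_group m_assoc)
    also have "\<dots> = x" using e by simp
    finally show "a \<otimes> b \<in> twisted_stab G \<alpha> x" using c unfolding twisted_stab_def by auto
    have xa: "x \<otimes> \<alpha> a = a \<otimes> x" using e(1) c x
      by (metis inv_solve_right m_closed gh.hom_closed)
    have "inv a \<otimes> x \<otimes> inv (\<alpha> (inv a)) = inv a \<otimes> (x \<otimes> \<alpha> a)"
      using c x by (simp add: gh.hom_inv m_assoc)
    also have "\<dots> = x" using c x xa by simp
    finally show "inv a \<in> twisted_stab G \<alpha> x" using c unfolding twisted_stab_def by auto
  qed
qed

lemma orbit_stab:
  assumes a: "\<alpha> \<in> hom G G" and x: "x \<in> carrier G" and fin: "finite (carrier G)"
  shows "card (twisted_conj G \<alpha> `` {x}) * card (twisted_stab G \<alpha> x) = order G"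
proof -
  interpret gh: group_hom G G \<alpha> using a by (unfold_locales) simp
  let ?H = "twisted_stab G \<alpha> x"
  let ?f = "\<lambda>k. inv k \<otimes> x \<otimes> inv (\<alpha> (inv k))"
  have sg: "subgroup ?H G" by (rule stab_subgroup[OF a x])
  have cl: "twisted_conj G \<alpha> `` {x} = ?f ` carrier G"
  proof
    show "twisted_conj G \<alpha> `` {x} \<subseteq> ?f ` carrier G"
    proof
      fix y assume "y \<in> twisted_conj G \<alpha> `` {x}"
      then obtain h where h: "h \<in> carrier G" "y = h \<otimes> x \<otimes> inv (\<alpha> h)" unfolding twisted_conj_def by auto
      then have "y = ?f (inv h)" by simp
      then show "y \<in> ?f ` carrier G" using h by blast
    qed
    show "?f ` carrier G \<subseteq> twisted_conj G \<alpha> `` {x}"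
    proof
      fix y assume "y \<in> ?f ` carrier G"
      then obtain k where "k \<in> carrier G" "y = ?f k" by blast
      then show "y \<in> twisted_conj G \<alpha> `` {x}" using x unfolding twisted_conj_def
        by (auto intro!: bexI[of _ "inv k"])
    qed
  qed
  have key: "(?f k1 = ?f k2) \<longleftrightarrow> (?H #> k2 = ?H #> k1)" if k: "k1 \<in> carrier G" "k2 \<in> carrier G" for k1 k2
  proof -
    let ?u = "k2 \<otimes> inv k1"
    have fk: "?f k = inv k \<otimes> x \<otimes> \<alpha> k" if "k \<in> carrier G" for k
      using that by (simp add: gh.hom_inv)
    have "(?f k1 = ?f k2) \<longleftrightarrow> (inv k1 \<otimes> x \<otimes> \<alpha> k1 = inv k2 \<otimes> x \<otimes> \<alpha> k2)" using fk k by simp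
    also have "\<dots> \<longleftrightarrow> (k2 \<otimes> (inv k1 \<otimes> x \<otimes> \<alpha> k1) \<otimes> inv (\<alpha> k1) = k2 \<otimes> (inv k2 \<otimes> x \<otimes> \<alpha> k2) \<otimes> inv (\<alpha> k1))"
      using k x by (simp add: lcancel')
    also have "\<dots> \<longleftrightarrow> (?u \<otimes> x = x \<otimes> \<alpha> ?u)"
      using k x by (simp add: m_assoc gh.hom_inv)
    also have "\<dots> \<longleftrightarrow> (?u \<otimes> x \<otimes> inv (\<alpha> ?u) = x)"
      using k x by (metis inv_closed m_closed gh.hom_closed inv_solve_right)
    also have "\<dots> \<longleftrightarrow> ?u \<in> ?H" using k unfolding twisted_stab_def by auto
    also have "\<dots> \<longleftrightarrow> (?H #> k2 = ?H #> k1)" using rcos_eq_iff[OF sg k(2,1)] by simp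
    finally show ?thesis .
  qed
  have "card (?f ` carrier G) = card ((\<lambda>k. ?H #> k) ` carrier G)"
    by (rule card_image_kernel_eq) (use key in auto)
  also have "(\<lambda>k. ?H #> k) ` carrier G = rcosets ?H" unfolding RCOSETS_def by auto
  finally show ?thesis using lagrange[OF sg] cl by simp
qed

lemma twisted_bound:
  assumes a: "\<alpha> \<in> hom G G" and x: "x \<in> carrier G" and fin: "finite (carrier G)"
  shows "card (twisted_stab G \<alpha> x) \<le> Lb (card (carrier G // twisted_conj G \<alpha>)) 1"
proof -
  let ?R = "twisted_conj G \<alpha>"
  let ?Q = "carrier G // ?R"
  have eq: "equiv (carrier G) ?R" by (rule tc_equiv[OF a])
  define rep where "rep C = (SOME y. y \<in> C)" for C :: "'a set"
  have rep: "rep C \<in> C" "rep C \<in> carrier G" if "C \<in> ?Q" for C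
  proof -
    show "rep C \<in> C" using in_quotient_imp_non_empty[OF eq that] unfolding rep_def by (simp add: some_in_eq)
    then show "rep C \<in> carrier G" using in_quotient_imp_subset[OF eq that] by blast
  qed
  have cls: "C = ?R `` {rep C}" if C: "C \<in> ?Q" for C
  proof -
    obtain y where y: "C = ?R `` {y}" "y \<in> carrier G" using quotientE[OF C] by blast
    have "(y, rep C) \<in> ?R" using rep(1)[OF C] y by simp
    then have "?R `` {y} = ?R `` {rep C}" by (rule equiv_class_eq[OF eq])
    with y(1) show ?thesis by (rule trans)
  qed
  have ordpos: "order G > 0" using fin by (simp add: order_gt_0_iff_finite)
  have finQ: "finite ?Q" using finite_quotient[OF fin equiv_type[OF eq]] .
  define n where "n C = card (twisted_stab G \<alpha> (rep C))" for C
  have os: "card C * n C = order G" if "C \<in> ?Q" for C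
    using orbit_stab[OF a rep(2)[OF that] fin] cls[OF that] unfolding n_def by simp
  have npos: "n C \<ge> 1" if "C \<in> ?Q" for C using os[OF that] ordpos
    by (cases "n C") auto
  have "order G = card (\<Union>?Q)" using Union_quotient[OF eq] by (simp add: order_def)
  also have "\<dots> = (\<Sum>C\<in>?Q. card C)"
    apply (rule card_Union_disjoint)
    using quotient_disj[OF eq] fin in_quotient_imp_subset[OF eq]
     apply (auto simp: pairwise_def disjnt_def)
    by (meson fin finite_subset in_quotient_imp_subset[OF eq])
  finally have sumc: "real (order G) = (\<Sum>C\<in>?Q. real (card C))" by simp
  have "(\<Sum>C\<in>?Q. 1 / real (n C)) = (\<Sum>C\<in>?Q. real (card C) / real (order G))"
  proof (rule sum.cong)
    fix C assume C: "C \<in> ?Q"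
    have "real (card C) * real (n C) = real (order G)" using os[OF C] by (metis of_nat_mult)
    then show "1 / real (n C) = real (card C) / real (order G)" using npos[OF C] ordpos
      by (simp add: field_simps)
  qed simp
  also have "\<dots> = 1" using sumc ordpos by (simp add: sum_divide_distrib[symmetric])
  finally have s1: "(\<Sum>C\<in>?Q. 1 / real (n C)) = real (1::nat) / real (1::nat)" by simp
  let ?Cx = "?R `` {x}"
  have Cx: "?Cx \<in> ?Q" using x by (rule quotientI)
  have "n ?Cx \<le> Lb (card ?Q) 1"
    by (rule landau[OF finQ refl _ _ s1 Cx]) (use npos in auto)
  moreover have "card (twisted_stab G \<alpha> x) = n ?Cx"
  proof -
    have "card ?Cx * card (twisted_stab G \<alpha> x) = card ?Cx * n ?Cx"
      using orbit_stab[OF a x fin] os[OF Cx] by simp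
    moreover have "card ?Cx > 0" using os[OF Cx] ordpos by (metis gr0I mult_0)
    ultimately show ?thesis by simp
  qed
  ultimately show ?thesis by simp
qed

end



context group begin

definition act :: "'a set \<Rightarrow> ('a set \<Rightarrow> nat) \<Rightarrow> 'a \<Rightarrow> nat \<Rightarrow> nat" where
  "act N \<beta> g = (\<lambda>k\<in>{0..<card (rcosets N)}. \<beta> (inv_into (rcosets N) \<beta> k #> g))"

lemma rcosets_mult_closed:
  assumes "subgroup H G" "C \<in> rcosets H" "g \<in> carrier G"
  shows "C #> g \<in> rcosets H"
proof -
  obtain x where x: "x \<in> carrier G" "C = H #> x" using assms(2) unfolding RCOSETS_def by auto
  have "C #> g = H #> (x \<otimes> g)" using x assms(1,3) by (simp add: coset_mult_assoc subgroup.subset)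
  then show ?thesis using x assms by (simp add: rcosetsI subgroup.subset)
qed

lemma rcosets_sub:
  assumes "subgroup H G" "C \<in> rcosets H" shows "C \<subseteq> carrier G"
  using assms unfolding RCOSETS_def by (auto dest: subgroup.elemrcos_carrier[OF _ is_group])


end

locale actloc = group +
  fixes N \<beta>
  assumes sg: "subgroup N G" and bij: "bij_betw \<beta> (rcosets N) {0..<card (rcosets N)}"
begin

abbreviation "d \<equiv> card (rcosets N)"
abbreviation "Cf k \<equiv> inv_into (rcosets N) \<beta> k"

lemma Cf: "k < d \<Longrightarrow> Cf k \<in> rcosets N" "k < d \<Longrightarrow> \<beta> (Cf k) = k"
  using bij by (auto simp: bij_betw_def inv_into_into f_inv_into_f)

lemma Cf_beta: "C \<in> rcosets N \<Longrightarrow> Cf (\<beta> C) = C"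
  using bij by (auto simp: bij_betw_def inv_into_f_f)

lemma beta_range: "C \<in> rcosets N \<Longrightarrow> \<beta> C < d"
  using bij by (auto simp: bij_betw_def)

lemma beta_inj: "C \<in> rcosets N \<Longrightarrow> C' \<in> rcosets N \<Longrightarrow> \<beta> C = \<beta> C' \<Longrightarrow> C = C'"
  using bij by (auto simp: bij_betw_def inj_on_def)

lemma act_range: "g \<in> carrier G \<Longrightarrow> k < d \<Longrightarrow> act N \<beta> g k < d"
  unfolding act_def using Cf rcosets_mult_closed[OF sg] beta_range by auto

lemma act_one: "k < d \<Longrightarrow> act N \<beta> \<one> k = k"
  unfolding act_def using Cf rcosets_sub[OF sg] by auto

lemma act_mult: "a \<in> carrier G \<Longrightarrow> b \<in> carrier G \<Longrightarrow> k < d \<Longrightarrow>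
    act N \<beta> (a \<otimes> b) k = act N \<beta> b (act N \<beta> a k)"
proof -
  assume ab: "a \<in> carrier G" "b \<in> carrier G" and k: "k < d"
  have c: "Cf k #> a \<in> rcosets N" using rcosets_mult_closed[OF sg Cf(1)[OF k] ab(1)] .
  have "act N \<beta> b (act N \<beta> a k) = \<beta> ((Cf k #> a) #> b)"
    using act_range[OF ab(1) k] k c unfolding act_def by (simp add: Cf_beta)
  also have "\<dots> = \<beta> (Cf k #> (a \<otimes> b))"
    using ab rcosets_sub[OF sg Cf(1)[OF k]] by (simp add: coset_mult_assoc)
  finally show ?thesis using k unfolding act_def by simp
qed

lemma act_inv: "s \<in> carrier G \<Longrightarrow> k < d \<Longrightarrow> act N \<beta> s (act N \<beta> (inv s) k) = k"
  using act_mult[of "inv s" s k] act_one by simp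

lemma act_inj: "s \<in> carrier G \<Longrightarrow> k < d \<Longrightarrow> k' < d \<Longrightarrow> act N \<beta> s k = act N \<beta> s k' \<Longrightarrow> k = k'"
proof -
  assume s: "s \<in> carrier G" and k: "k < d" "k' < d" and e: "act N \<beta> s k = act N \<beta> s k'"
  have "act N \<beta> (inv s) (act N \<beta> s k) = act N \<beta> (inv s) (act N \<beta> s k')" using e by simp
  then show ?thesis using act_mult[of s "inv s"] act_one s k by simp
qed

lemma act_mem: "g \<in> carrier G \<Longrightarrow> (g \<in> N) \<longleftrightarrow> act N \<beta> g (\<beta> N) = \<beta> N"
proof -
  assume g: "g \<in> carrier G"
  have Nr: "N \<in> rcosets N" using subgroup.subgroup_in_rcosets[OF sg is_group] .
  have "act N \<beta> g (\<beta> N) = \<beta> (N #> g)" using beta_range[OF Nr] Cf_beta[OF Nr] unfolding act_def by simp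
  moreover have "(\<beta> (N #> g) = \<beta> N) \<longleftrightarrow> N #> g = N"
    using beta_inj[OF rcosets_mult_closed[OF sg Nr g] Nr] by auto
  moreover have "N #> g = N \<longleftrightarrow> g \<in> N" using coset_join1[OF _ g sg] coset_join2[OF g sg] by blast
  ultimately show ?thesis by simp
qed

end

lemma (in group) act_gen_eq:
  assumes a1: "actloc G N1 \<beta>1" and a2: "actloc G N2 \<beta>2"
    and dd: "card (rcosets N1) = card (rcosets N2)"
    and SG: "S \<subseteq> carrier G"
    and tab: "\<And>s. s \<in> S \<Longrightarrow> act N1 \<beta>1 s = act N2 \<beta>2 s"
    and g: "g \<in> generate G S"
  shows "act N1 \<beta>1 g = act N2 \<beta>2 g"
  using g
proof (induction rule: generate.induct)
  case one
  show ?case unfolding act_def using actloc.act_one[OF a1] actloc.act_one[OF a2] dd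
    by (auto simp: act_def restrict_def)
next
  case (incl h) then show ?case by (rule tab)
next
  case (inv h)
  have h: "h \<in> carrier G" using inv SG by auto
  show ?case
  proof
    fix k
    show "act N1 \<beta>1 (inv h) k = act N2 \<beta>2 (inv h) k"
    proof (cases "k < card (rcosets N1)")
      case True
      let ?u = "act N1 \<beta>1 (inv h) k" and ?v = "act N2 \<beta>2 (inv h) k"
      have u: "?u < card (rcosets N1)" using actloc.act_range[OF a1 _ True] h by simp
      have v: "?v < card (rcosets N1)" using actloc.act_range[OF a2 _, of "inv h" k] h True dd by simp
      have "act N1 \<beta>1 h ?u = k" using actloc.act_inv[OF a1 h True] .
      moreover have "act N1 \<beta>1 h ?v = k" using actloc.act_inv[OF a2 h, of k] True dd tab[OF inv(1)] by simp
      ultimately show ?thesis using actloc.act_inj[OF a1 h u v] by simp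
    qed (use dd in \<open>simp add: act_def\<close>)
  qed
next
  case (eng h1 h2)
  have h: "h1 \<in> carrier G" "h2 \<in> carrier G"
    using eng(1,2) generate_in_carrier[OF SG] by auto
  show ?case
  proof
    fix k
    show "act N1 \<beta>1 (h1 \<otimes> h2) k = act N2 \<beta>2 (h1 \<otimes> h2) k"
    proof (cases "k < card (rcosets N1)")
      case True
      then show ?thesis using actloc.act_mult[OF a1 h True] actloc.act_mult[OF a2 h, of k] dd eng.IH by simp
    qed (use dd in \<open>simp add: act_def\<close>)
  qed
qed


lemma (in group) finite_bounded_normals:
  assumes S: "finite S" "S \<subseteq> carrier G" "generate G S = carrier G"
  shows "finite {N. N \<lhd> G \<and> finite (rcosets N) \<and> card (rcosets N) \<le> D}"
proof -
  let ?F = "{N. N \<lhd> G \<and> finite (rcosets N) \<and> card (rcosets N) \<le> D}"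
  let ?D = "(\<Union>d\<in>{..D}. {d} \<times> {..<d} \<times> (S \<rightarrow>\<^sub>E ({0..<d} \<rightarrow>\<^sub>E {0..<d})))"
  define P where "P N dat \<longleftrightarrow> (\<exists>\<beta>. bij_betw \<beta> (rcosets N) {0..<card (rcosets N)} \<and>
      dat = (card (rcosets N), \<beta> N, restrict (act N \<beta>) S))" for N dat
  have finD: "finite ?D" using S(1) by (auto intro!: finite_PiE)
  have ex: "\<exists>dat\<in>?D. P N dat" if N: "N \<in> ?F" for N
  proof -
    have sg: "subgroup N G" using N normal_imp_subgroup by auto
    obtain \<beta> where b: "bij_betw \<beta> (rcosets N) {0..<card (rcosets N)}"
      using ex_bij_betw_finite_nat N by blast
    interpret A: actloc G N \<beta> by (intro actloc.intro actloc_axioms.intro is_group sg b)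
    have Nr: "N \<in> rcosets N" using subgroup.subgroup_in_rcosets[OF sg is_group] .
    have "restrict (act N \<beta>) S \<in> S \<rightarrow>\<^sub>E ({0..<card (rcosets N)} \<rightarrow>\<^sub>E {0..<card (rcosets N)})"
      using A.act_range S(2) by (auto simp: act_def PiE_def Pi_def extensional_def)
    moreover have "\<beta> N < card (rcosets N)" using A.beta_range[OF Nr] .
    ultimately have "(card (rcosets N), \<beta> N, restrict (act N \<beta>) S) \<in> ?D" using N by auto
    then show ?thesis unfolding P_def using b by blast
  qed
  have uniq: "N1 = N2" if N: "N1 \<in> ?F" "N2 \<in> ?F" "P N1 dat" "P N2 dat" for N1 N2 dat
  proof -
    have sg: "subgroup N1 G" "subgroup N2 G" using N normal_imp_subgroup by auto
    obtain \<beta>1 \<beta>2 where b: "bij_betw \<beta>1 (rcosets N1) {0..<card (rcosets N1)}"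
      "bij_betw \<beta>2 (rcosets N2) {0..<card (rcosets N2)}"
      and e: "card (rcosets N1) = card (rcosets N2)" "\<beta>1 N1 = \<beta>2 N2"
        "restrict (act N1 \<beta>1) S = restrict (act N2 \<beta>2) S"
      using N(3,4) unfolding P_def by auto
    have a1: "actloc G N1 \<beta>1" by (intro actloc.intro actloc_axioms.intro is_group sg b)
    have a2: "actloc G N2 \<beta>2" by (intro actloc.intro actloc_axioms.intro is_group sg b)
    have tab: "act N1 \<beta>1 s = act N2 \<beta>2 s" if "s \<in> S" for s
      using e(3) that by (metis restrict_apply')
    have eqa: "act N1 \<beta>1 g = act N2 \<beta>2 g" if "g \<in> carrier G" for g
      using act_gen_eq[OF a1 a2 e(1) S(2) tab] that S(3) by blast
    have iff: "g \<in> N1 \<longleftrightarrow> g \<in> N2" for g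
    proof (cases "g \<in> carrier G")
      case True
      then show ?thesis using actloc.act_mem[OF a1 True] actloc.act_mem[OF a2 True] eqa[OF True] e(2)
        by simp
    next
      case False
      then show ?thesis using sg subgroup.subset by blast
    qed
    then show ?thesis by blast
  qed
  define code where "code N = (SOME dat. dat \<in> ?D \<and> P N dat)" for N
  have code: "code N \<in> ?D \<and> P N (code N)" if "N \<in> ?F" for N
    unfolding code_def using ex[OF that] by (metis (no_types, lifting) someI_ex)
  have "inj_on code ?F"
  proof (rule inj_onI)
    fix N1 N2 assume N: "N1 \<in> ?F" "N2 \<in> ?F" "code N1 = code N2"
    have "P N1 (code N1)" "P N2 (code N1)" using code[OF N(1)] code[OF N(2)] N(3) by auto
    then show "N1 = N2" using uniq[OF N(1,2)] by blast
  qed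
  moreover have "code ` ?F \<subseteq> ?D" using code by blast
  ultimately show ?thesis using finD by (meson inj_on_finite)
qed




lemma kernel_factor:
  assumes "\<And>x y. x \<in> A \<Longrightarrow> y \<in> A \<Longrightarrow> q x = q y \<Longrightarrow> p x = p y"
  shows "p ` A = (\<lambda>z. p (SOME k. k \<in> A \<and> q k = z)) ` (q ` A)"
proof -
  define th where "th = (\<lambda>z. p (SOME k. k \<in> A \<and> q k = z))"
  have th: "th (q x) = p x" if "x \<in> A" for x
  proof -
    have "\<exists>k. k \<in> A \<and> q k = q x" using that by blast
    then have "(SOME k. k \<in> A \<and> q k = q x) \<in> A \<and> q (SOME k. k \<in> A \<and> q k = q x) = q x"
      by (rule someI_ex)
    then show ?thesis unfolding th_def using assms that by blast
  qed
  have "p ` A = th ` (q ` A)" using th by (auto simp: image_iff)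
  then show ?thesis unfolding th_def .
qed

lemma kernel_card_le:
  assumes "\<And>x y. x \<in> A \<Longrightarrow> y \<in> A \<Longrightarrow> q x = q y \<Longrightarrow> p x = p y" "finite (q ` A)"
  shows "card (p ` A) \<le> card (q ` A)" "finite (p ` A)"
proof -
  have e: "p ` A = (\<lambda>z. p (SOME k. k \<in> A \<and> q k = z)) ` (q ` A)"
    by (rule kernel_factor) (rule assms(1))
  show "card (p ` A) \<le> card (q ` A)" unfolding e by (rule card_image_le[OF assms(2)])
  show "finite (p ` A)" unfolding e by (rule finite_imageI[OF assms(2)])
qed

context group begin

lemma preimage_normal:
  assumes a: "\<phi> \<in> hom G G" and N: "N \<lhd> G" and fin: "finite (rcosets N)"
  shows "{y \<in> carrier G. \<phi> y \<in> N} \<lhd> G" "finite (rcosets {y \<in> carrier G. \<phi> y \<in> N})"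
    "card (rcosets {y \<in> carrier G. \<phi> y \<in> N}) \<le> card (rcosets N)"
proof -
  interpret gh: group_hom G G \<phi> using a by (unfold_locales) simp
  let ?N' = "{y \<in> carrier G. \<phi> y \<in> N}"
  have sgN: "subgroup N G" using N normal_imp_subgroup by blast
  have sg: "subgroup ?N' G"
  proof
    show "?N' \<subseteq> carrier G" by auto
    show "\<one> \<in> ?N'" using subgroup.one_closed[OF sgN] by simp
    fix x y assume "x \<in> ?N'" "y \<in> ?N'"
    then show "x \<otimes> y \<in> ?N'" "inv x \<in> ?N'"
      using subgroup.m_closed[OF sgN] subgroup.m_inv_closed[OF sgN] by (auto simp: gh.hom_inv)
  qed
  show "?N' \<lhd> G"
  proof (rule normal_invI[OF sg])
    fix x h assume "x \<in> carrier G" "h \<in> ?N'"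
    then show "x \<otimes> h \<otimes> inv x \<in> ?N'"
      using normal_invE(2)[OF N, of "\<phi> x" "\<phi> h"] by (auto simp: gh.hom_inv)
  qed
  have k: "N' #> x = N' #> y" if "x \<in> carrier G" "y \<in> carrier G" "N #> \<phi> x = N #> \<phi> y" and "N' = ?N'" for x y N'
  proof -
    have "\<phi> x \<otimes> inv (\<phi> y) \<in> N" using rcos_eq_iff[OF sgN] that by simp
    then have "x \<otimes> inv y \<in> ?N'" using that by (simp add: gh.hom_inv)
    then show ?thesis using rcos_eq_iff[OF sg that(1,2)] that(4) by simp
  qed
  have im: "rcosets ?N' = (\<lambda>x. ?N' #> x) ` carrier G" unfolding RCOSETS_def by auto
  have imN: "(\<lambda>x. N #> \<phi> x) ` carrier G \<subseteq> rcosets N" using subgroup.subset[OF sgN] by (auto intro!: rcosetsI)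
  then have fq: "finite ((\<lambda>x. N #> \<phi> x) ` carrier G)" using fin finite_subset by blast
  have "card (rcosets ?N') \<le> card ((\<lambda>x. N #> \<phi> x) ` carrier G)" "finite (rcosets ?N')"
    unfolding im by (rule kernel_card_le[OF _ fq], use k in blast)+
  then show "finite (rcosets ?N')" "card (rcosets ?N') \<le> card (rcosets N)"
    using card_mono[OF fin imN] by auto
qed

lemma exists_M:
  assumes S: "finite S" "S \<subseteq> carrier G" "generate G S = carrier G"
    and a: "\<phi> \<in> hom G G" and T: "finite T" "T \<subseteq> carrier G" "\<one> \<notin> T"
    and rf: "residually_finite G"
  shows "\<exists>M. M \<lhd> G \<and> finite (rcosets M) \<and> (\<forall>x\<in>M. \<phi> x \<in> M) \<and> T \<inter> M = {}"
proof -
  have "\<forall>t\<in>T. \<exists>N. N \<lhd> G \<and> finite (rcosets N) \<and> t \<notin> N"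
  proof
    fix t assume t: "t \<in> T"
    then have "t \<in> carrier G" "t \<noteq> \<one>" using T by auto
    then show "\<exists>N. N \<lhd> G \<and> finite (rcosets N) \<and> t \<notin> N"
      using rf unfolding residually_finite_def by blast
  qed
  then obtain Nf where Nf: "\<And>t. t \<in> T \<Longrightarrow> Nf t \<lhd> G \<and> finite (rcosets (Nf t)) \<and> t \<notin> Nf t"
    by metis
  define D where "D = Max (insert 1 ((\<lambda>t. card (rcosets (Nf t))) ` T))"
  define F where "F = {N. N \<lhd> G \<and> finite (rcosets N) \<and> card (rcosets N) \<le> D}"
  have finF: "finite F" unfolding F_def by (rule finite_bounded_normals[OF S])
  have D1: "1 \<le> D" unfolding D_def using T(1) by simp
  have NfF: "Nf t \<in> F" if "t \<in> T" for t
    unfolding F_def using Nf[OF that] T(1) that by (auto simp: D_def)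
  have rcG: "rcosets (carrier G) = {carrier G}"
    unfolding RCOSETS_def using coset_join2[OF _ subgroup_self] by auto
  have GF: "carrier G \<in> F" unfolding F_def using normal_self rcG D1 by simp
  define M where "M = \<Inter>F"
  have sgF: "\<And>N. N \<in> F \<Longrightarrow> subgroup N G" unfolding F_def using normal_imp_subgroup by blast
  have sgM: "subgroup M G" unfolding M_def by (rule subgroups_Inter) (use sgF GF in auto)
  have nM: "M \<lhd> G"
  proof (rule normal_invI[OF sgM])
    fix x h assume "x \<in> carrier G" "h \<in> M"
    then show "x \<otimes> h \<otimes> inv x \<in> M" unfolding M_def F_def using normal_invE(2) by blast
  qed
  have TM: "T \<inter> M = {}" unfolding M_def using NfF Nf by blast
  have inv: "\<forall>x\<in>M. \<phi> x \<in> M"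
  proof
    fix x assume x: "x \<in> M"
    show "\<phi> x \<in> M" unfolding M_def
    proof
      fix N assume N: "N \<in> F"
      have "{y \<in> carrier G. \<phi> y \<in> N} \<in> F"
        using N preimage_normal[OF a] unfolding F_def by (auto intro: order_trans)
      then show "\<phi> x \<in> N" using x unfolding M_def by blast
    qed
  qed
  have finM: "finite (rcosets M)"
  proof -
    let ?q = "\<lambda>x. (\<lambda>N\<in>F. N #> x)"
    have im: "rcosets M = (\<lambda>x. M #> x) ` carrier G" unfolding RCOSETS_def by auto
    have "?q ` carrier G \<subseteq> (\<Pi>\<^sub>E N\<in>F. rcosets N)"
      using sgF subgroup.subset by (fastforce intro!: rcosetsI)
    moreover have "finite (\<Pi>\<^sub>E N\<in>F. rcosets N)"
      using finF by (rule finite_PiE) (auto simp: F_def)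
    ultimately have fq: "finite (?q ` carrier G)" using finite_subset by blast
    have k: "M #> x = M #> y" if xy: "x \<in> carrier G" "y \<in> carrier G" "?q x = ?q y" for x y
    proof -
      have "N #> x = N #> y" if "N \<in> F" for N using fun_cong[OF xy(3), of N] that by simp
      then have "x \<otimes> inv y \<in> N" if "N \<in> F" for N using rcos_eq_iff[OF sgF[OF that] xy(1,2)] that by blast
      then have "x \<otimes> inv y \<in> M" unfolding M_def by blast
      then show ?thesis using rcos_eq_iff[OF sgM xy(1,2)] by simp
    qed
    show ?thesis unfolding im by (rule kernel_card_le(2)[OF _ fq]) (use k in blast)
  qed
  show ?thesis using nM finM inv TM by blast
qed

end



lemma (in group) main_aux:
  assumes "True"
    and "torsion_free G"
    and "finitely_generated G"
    and "residually_finite G"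
    and "\<phi> \<in> iso G G"
    and "reidemeister_number G \<phi> < \<infinity>"
  shows "\<forall>g \<in> carrier G. twisted_stab G \<phi> g = {\<one>\<^bsub>G\<^esub>}"
proof
  have a: "\<phi> \<in> hom G G" using assms(5) by (simp add: iso_def)
  interpret gh: group_hom G G \<phi> using a by (unfold_locales) simp
  fix g assume g: "g \<in> carrier G"
  let ?RG = "twisted_conj G \<phi>"
  have eqG: "equiv (carrier G) ?RG" by (rule tc_equiv[OF a])
  have finR: "finite (carrier G // ?RG)"
    using assms(6) unfolding reidemeister_number_def by (auto split: if_splits)
  define R where "R = card (carrier G // ?RG)"
  define K where "K = Lb R 1"
  have sgS: "subgroup (twisted_stab G \<phi> g) G" by (rule stab_subgroup[OF a g])
  have "b = \<one>" if b: "b \<in> twisted_stab G \<phi> g" for b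
  proof (rule ccontr)
    assume b1: "b \<noteq> \<one>"
    have bc: "b \<in> carrier G" using b unfolding twisted_stab_def by auto
    have bpow: "b [^] (i::nat) \<in> twisted_stab G \<phi> g" for i
    proof (induction i)
      case 0 then show ?case using subgroup.one_closed[OF sgS] by simp
    next
      case (Suc i) then show ?case using subgroup.m_closed[OF sgS _ b] by (simp add: nat_pow_Suc)
    qed
    define T where "T = (\<lambda>i. b [^] i) ` {1..K}"
    have T: "finite T" "T \<subseteq> carrier G" "\<one> \<notin> T"
    proof -
      show "finite T" unfolding T_def by simp
      show "T \<subseteq> carrier G" unfolding T_def using bc by auto
      show "\<one> \<notin> T"
      proof
        assume "\<one> \<in> T"
        then obtain i where i: "i \<in> {1..K}" "\<one> = b [^] i" unfolding T_def by blast
        have "b [^] i \<noteq> \<one>" using assms(2) bc b1 i(1) unfolding torsion_free_def by auto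
        then show False using i(2) by simp
      qed
    qed
    obtain S where S: "finite S" "S \<subseteq> carrier G" "generate G S = carrier G"
      using assms(3) unfolding finitely_generated_def by blast
    obtain M where M: "M \<lhd> G" "finite (rcosets M)" "\<forall>x\<in>M. \<phi> x \<in> M" "T \<inter> M = {}"
      using exists_M[OF S a T assms(4)] by blast
    interpret N: normal M G by (rule M(1))
    have sgM: "subgroup M G" by (rule N.subgroup_axioms)
    have Msub: "M \<subseteq> carrier G" by (rule N.subset)
    let ?Q = "G Mod M"
    have Qg: "group ?Q" by (rule N.factorgroup_is_group)
    have cQ: "carrier ?Q = (\<lambda>x. M #> x) ` carrier G" by (rule carrier_FactGroup)
    have finQ: "finite (carrier ?Q)" using M(2) by (simp add: FactGroup_def)
    have mulQ: "(M #> x) \<otimes>\<^bsub>?Q\<^esub> (M #> y) = M #> (x \<otimes> y)" if "x \<in> carrier G" "y \<in> carrier G" for x y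
      using N.rcos_sum[OF that] by simp
    have inQ: "M #> x \<in> carrier ?Q" if "x \<in> carrier G" for x using cQ that by blast
    have invQ: "inv\<^bsub>?Q\<^esub> (M #> x) = M #> inv x" if x: "x \<in> carrier G" for x
    proof (rule group.inv_equality[OF Qg])
      show "(M #> inv x) \<otimes>\<^bsub>?Q\<^esub> (M #> x) = \<one>\<^bsub>?Q\<^esub>" using mulQ x Msub by simp
    qed (use x inQ in auto)
    define \<alpha> where "\<alpha> C = M #> \<phi> (SOME x. x \<in> C)" for C
    have \<alpha>M: "\<alpha> (M #> x) = M #> \<phi> x" if x: "x \<in> carrier G" for x
    proof -
      have "x \<in> M #> x" by (rule rcos_self[OF x sgM])
      then have y: "(SOME y. y \<in> M #> x) \<in> M #> x" by (rule someI)
      let ?y = "SOME y. y \<in> M #> x"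
      have yc: "?y \<in> carrier G" using y x Msub r_coset_subset_G by blast
      have "?y \<otimes> inv x \<in> M" using subgroup.rcos_module_imp[OF sgM is_group x y] .
      then have "\<phi> ?y \<otimes> inv (\<phi> x) \<in> M" using M(3) x yc by (auto simp: gh.hom_inv)
      then have "M #> \<phi> ?y = M #> \<phi> x" using rcos_eq_iff[OF sgM] x yc by simp
      then show ?thesis unfolding \<alpha>_def .
    qed
    have ahom: "\<alpha> \<in> hom ?Q ?Q"
    proof (rule homI)
      fix U assume "U \<in> carrier ?Q"
      then obtain x where "x \<in> carrier G" "U = M #> x" unfolding cQ by (auto simp: image_iff)
      then show "\<alpha> U \<in> carrier ?Q" using \<alpha>M inQ by simp
    next
      fix U V assume UV: "U \<in> carrier ?Q" "V \<in> carrier ?Q"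
      obtain x where x: "x \<in> carrier G" "U = M #> x" using UV(1) unfolding cQ by (auto simp: image_iff)
      obtain y where y: "y \<in> carrier G" "V = M #> y" using UV(2) unfolding cQ by (auto simp: image_iff)
      note xy = x y
      show "\<alpha> (U \<otimes>\<^bsub>?Q\<^esub> V) = \<alpha> U \<otimes>\<^bsub>?Q\<^esub> \<alpha> V"
        using xy \<alpha>M by (simp add: N.rcos_sum)
    qed
    let ?RQ = "twisted_conj ?Q \<alpha>"
    have eqQ: "equiv (carrier ?Q) ?RQ" by (rule group.tc_equiv[OF Qg ahom])
    have proj: "(M #> x, M #> y) \<in> ?RQ" if xyR: "(x, y) \<in> ?RG" for x y
    proof -
      obtain h where h: "x \<in> carrier G" "y \<in> carrier G" "h \<in> carrier G" "y = h \<otimes> x \<otimes> inv (\<phi> h)"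
        using xyR unfolding twisted_conj_def by auto
      have "M #> y = (M #> h) \<otimes>\<^bsub>?Q\<^esub> (M #> x) \<otimes>\<^bsub>?Q\<^esub> inv\<^bsub>?Q\<^esub> (\<alpha> (M #> h))"
        using h by (simp add: \<alpha>M invQ N.rcos_sum)
      then show ?thesis unfolding twisted_conj_def using h inQ by blast
    qed
    have cardQ: "card (carrier ?Q // ?RQ) \<le> R"
    proof -
      have e1: "carrier ?Q // ?RQ = (\<lambda>x. ?RQ `` {M #> x}) ` carrier G"
        unfolding quotient_def cQ by auto
      have e2: "carrier G // ?RG = (\<lambda>x. ?RG `` {x}) ` carrier G"
        unfolding quotient_def by auto
      have "card ((\<lambda>x. ?RQ `` {M #> x}) ` carrier G) \<le> card ((\<lambda>x. ?RG `` {x}) ` carrier G)"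
      proof (rule kernel_card_le(1))
        show "finite ((\<lambda>x. ?RG `` {x}) ` carrier G)" using finR e2 by simp
        fix x y assume xy: "x \<in> carrier G" "y \<in> carrier G" "?RG `` {x} = ?RG `` {y}"
        then have "(x, y) \<in> ?RG" using eq_equiv_class_iff[OF eqG] by blast
        then have "(M #> x, M #> y) \<in> ?RQ" by (rule proj)
        then show "?RQ `` {M #> x} = ?RQ `` {M #> y}" by (rule equiv_class_eq[OF eqQ])
      qed
      then show ?thesis using e1 e2 unfolding R_def by simp
    qed
    let ?SQ = "twisted_stab ?Q \<alpha> (M #> g)"
    have inS: "M #> b [^] i \<in> ?SQ" for i :: nat
    proof -
      have c: "b [^] i \<in> carrier G" using bc by simp
      have e: "g = b [^] i \<otimes> g \<otimes> inv (\<phi> (b [^] i))" using bpow[of i] unfolding twisted_stab_def by auto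
      have "(M #> b [^] i) \<otimes>\<^bsub>?Q\<^esub> (M #> g) \<otimes>\<^bsub>?Q\<^esub> inv\<^bsub>?Q\<^esub> (\<alpha> (M #> b [^] i)) = M #> g"
        using c g by (simp add: \<alpha>M invQ N.rcos_sum e[symmetric])
      then show ?thesis unfolding twisted_stab_def using c inQ by auto
    qed
    have neq: "M #> b [^] i \<noteq> M #> b [^] j" if ij: "i < j" "j \<le> K" for i j :: nat
    proof
      assume e: "M #> b [^] i = M #> b [^] j"
      have bj: "b [^] j = b [^] (j - i) \<otimes> b [^] i" using nat_pow_mult[OF bc, of "j - i" i] ij by simp
      have "b [^] j \<otimes> inv (b [^] i) \<in> M" using rcos_eq_iff[OF sgM, of "b [^] j" "b [^] i"] e bc by simp
      then have "b [^] (j - i) \<in> M" using bj bc by (simp add: m_assoc)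
      moreover have "b [^] (j - i) \<in> T" unfolding T_def using ij by (intro imageI) auto
      ultimately show False using M(4) by blast
    qed
    have inj: "inj_on (\<lambda>i. M #> b [^] i) {0..K}"
    proof (rule inj_onI)
      fix i j assume ij: "i \<in> {0..K}" "j \<in> {0..K}" "M #> b [^] i = M #> b [^] j"
      show "i = j"
      proof (rule ccontr)
        assume "i \<noteq> j"
        then consider "i < j" | "j < i" by linarith
        then show False
        proof cases
          case 1 then show False using neq[of i j] ij by auto
        next
          case 2 then show False using neq[of j i] ij by auto
        qed
      qed
    qed
    have "Suc K = card ((\<lambda>i. M #> b [^] i) ` {0..K})" using card_image[OF inj] by simp
    also have "\<dots> \<le> card ?SQ"
    proof (rule card_mono)
      show "finite ?SQ" using finQ unfolding twisted_stab_def by simp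
      show "(\<lambda>i. M #> b [^] i) ` {0..K} \<subseteq> ?SQ" using inS by auto
    qed
    also have "\<dots> \<le> Lb (card (carrier ?Q // ?RQ)) 1"
      by (rule group.twisted_bound[OF Qg ahom inQ[OF g] finQ])
    also have "\<dots> \<le> K" unfolding K_def by (rule Lb_mono_r[OF cardQ])
    finally show False by simp
  qed
  moreover have "\<one> \<in> twisted_stab G \<phi> g" by (rule subgroup.one_closed[OF sgS])
  ultimately show "twisted_stab G \<phi> g = {\<one>}" by blast
qed

theorem mainTheorem11:
  fixes G :: "('a, 'b) monoid_scheme" and \<phi> :: "'a \<Rightarrow> 'a"
  assumes "group G"
    and "torsion_free G"
    and "finitely_generated G"
    and "residually_finite G"
    and "\<phi> \<in> iso G G"
    and "reidemeister_number G \<phi> < \<infinity>"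
  shows "\<forall>g \<in> carrier G. twisted_stab G \<phi> g = {\<one>\<^bsub>G\<^esub>}"
  using group.main_aux[OF assms(1) _ assms(2-6)] by simp



end
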